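(* Assume (A1) and (A2). For each $k$, let $v^{(k)}$ denote the minimizer of $\min_{v\in\mathbb{R}^n}\{J(x^{(k)}-t_kv)+t_kH^*(v)\}$ (equivalently of $\min_{v\in\mathrm{int}\,\mathrm{dom}\,H^*}\{t_kD_{H^*}(x^{(k)}/t_k,v)+J^*(\nabla H^*(v))\}$). Then there is $N\in\mathbb{N}$ such that for all $k\ge N$ this minimizer exists and is unique (and the two problems have the same minimizer), and $\lim_{k\to\infty}v^{(k)}=v^{(0)}$.
   Context: $\Gamma_0(\mathbb{R}^n)$ denotes the set of proper, convex, lower semicontinuous functions $\mathbb{R}^n\to\mathbb{R}\cup\{+\infty\}$; $f^*$ is the Legendre–Fenchel transform. A function $g$ is 1-coercive if $g(x)/\|x\|\to+\infty$ as $\|x\|\to\infty$. A function $f\in\Gamma_0(\mathbb{R}^n)$ is Legendre if: $\mathrm{int}\,\mathrm{dom}\,f\neq\emptyset$; $f$ is differentiable on $\mathrm{int}\,\mathrm{dom}\,f$; $\partial f(x)=\emptyset$ for $x\in\mathrm{dom}\,f\setminus\mathrm{int}\,\mathrm{dom}\,f$ and $\partial f(x)=\{\nabla f(x)\}$ on $\mathrm{int}\,\mathrm{dom}\,f$; and $f$ is strictly convex on $\mathrm{int}\,\mathrm{dom}\,f$. $D_f(x,u)=f(x)-f(u)-\langle\nabla f(u),x-u\rangle$. Assumption (A1): $J,H\in\Gamma_0(\mathbb{R}^n)$, $J$ is 1-coercive, and $H$ is a Legendre function. Assumption (A2): $v^{(0)}\in\mathrm{int}\,\mathrm{dom}\,H^*$;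 $(t_k)$ is a sequence of positive numbers with $t_k\to+\infty$; $(x^{(k)})\subset\mathbb{R}^n$ with $x^{(k)}/t_k\to v^{(0)}$; $x^{(k)}-t_kv^{(0)}\in\mathrm{dom}\,J$ for all $k$; and the sequence $J(x^{(k)}-t_kv^{(0)})/t_k$ is bounded from above. *)

theory Defs
  imports "HOL-Analysis.Analysis"
begin

text \<open>Extended-real-valued functions on a Euclidean space 'a (standing for R^n).
  The value +infinity is PInfty.\<close>

definition edom :: "('a \<Rightarrow> ereal) \<Rightarrow> 'a set" where
  "edom f = {x. f x < \<infinity>}"

definition proper_fun :: "('a \<Rightarrow> ereal) \<Rightarrow> bool" where
  "proper_fun f \<longleftrightarrow> edom f \<noteq> {} \<and> (\<forall>x. f x \<noteq> -\<infinity>)"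

definition epigraph :: "('a \<Rightarrow> ereal) \<Rightarrow> ('a \<times> real) set" where
  "epigraph f = {(x, r). f x \<le> ereal r}"

definition convex_fun :: "('a::real_vector \<Rightarrow> ereal) \<Rightarrow> bool" where
  "convex_fun f \<longleftrightarrow> convex (epigraph f)"

definition lsc_fun :: "('a::topological_space \<Rightarrow> ereal) \<Rightarrow> bool" where
  "lsc_fun f \<longleftrightarrow> (\<forall>x. f x \<le> Liminf (at x) f)"

definition Gamma0 :: "('a::real_normed_vector \<Rightarrow> ereal) \<Rightarrow> bool" where
  "Gamma0 f \<longleftrightarrow> proper_fun f \<and> convex_fun f \<and> lsc_fun f"

definition fenchel_conj :: "('a::real_inner \<Rightarrow> ereal) \<Rightarrow> 'a \<Rightarrow> ereal" where
  "fenchel_conj f y = (SUP x. ereal (inner x y) - f x)"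

definition one_coercive :: "('a::real_normed_vector \<Rightarrow> ereal) \<Rightarrow> bool" where
  "one_coercive g \<longleftrightarrow> ((\<lambda>x. g x / ereal (norm x)) \<longlongrightarrow> \<infinity>) at_infinity"

definition subdiff :: "('a::real_inner \<Rightarrow> ereal) \<Rightarrow> 'a \<Rightarrow> 'a set" where
  "subdiff f x = {g. x \<in> edom f \<and> (\<forall>y. f x + ereal (inner g (y - x)) \<le> f y)}"

text \<open>Differentiability and gradient of f at a point, f viewed as a real function
  (relevant on the interior of the domain, where f is finite).\<close>
definition differentiable_efun :: "('a::real_inner \<Rightarrow> ereal) \<Rightarrow> 'a \<Rightarrow> bool" where
  "differentiable_efun f x \<longleftrightarrow> (\<exists>D. GDERIV (\<lambda>y. real_of_ereal (f y)) x :> D)"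

definition egrad :: "('a::real_inner \<Rightarrow> ereal) \<Rightarrow> 'a \<Rightarrow> 'a" where
  "egrad f x = (THE D. GDERIV (\<lambda>y. real_of_ereal (f y)) x :> D)"

definition strictly_convex_on_set :: "'a::real_vector set \<Rightarrow> ('a \<Rightarrow> ereal) \<Rightarrow> bool" where
  "strictly_convex_on_set S f \<longleftrightarrow>
     (\<forall>x\<in>S. \<forall>y\<in>S. \<forall>t. x \<noteq> y \<longrightarrow> 0 < t \<longrightarrow> t < 1 \<longrightarrow>
        f ((1 - t) *\<^sub>R x + t *\<^sub>R y) < ereal (1 - t) * f x + ereal t * f y)"

definition legendre :: "('a::euclidean_space \<Rightarrow> ereal) \<Rightarrow> bool" where
  "legendre f \<longleftrightarrow> Gamma0 f \<and>
     interior (edom f) \<noteq> {} \<and>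
     (\<forall>x\<in>interior (edom f). differentiable_efun f x) \<and>
     (\<forall>x\<in>edom f - interior (edom f). subdiff f x = {}) \<and>
     (\<forall>x\<in>interior (edom f). subdiff f x = {egrad f x}) \<and>
     strictly_convex_on_set (interior (edom f)) f"

definition bregman :: "('a::real_inner \<Rightarrow> ereal) \<Rightarrow> 'a \<Rightarrow> 'a \<Rightarrow> ereal" where
  "bregman f x u = f x - f u - ereal (inner (egrad f u) (x - u))"

end

theory Submission
  imports Defs
begin

definition lscp :: "('a::topological_space \<Rightarrow> ereal) \<Rightarrow> bool" where
  "lscp f \<longleftrightarrow> (\<forall>y (c::real). ereal c < f y \<longrightarrow> eventually (\<lambda>z. ereal c < f z) (nhds y))"

lemma lsc_fun_lscp: assumes "lsc_fun f" shows "lscp f"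
  unfolding lscp_def
proof (intro allI impI)
  fix y c assume c: "ereal c < f y"
  have "f y \<le> Liminf (at y) f" using assms unfolding lsc_fun_def by blast
  hence "eventually (\<lambda>z. ereal c < f z) (at y)" using c le_Liminf_iff by blast
  hence "eventually (\<lambda>z. z \<noteq> y \<longrightarrow> ereal c < f z) (nhds y)"
    by (simp add: eventually_at_filter)
  thus "eventually (\<lambda>z. ereal c < f z) (nhds y)"
    by (rule eventually_mono) (use c in auto)
qed

lemma lscp_seq:
  assumes "lscp f" "X \<longlonglongrightarrow> y" "ereal c < f y"
  shows "eventually (\<lambda>n. ereal c < f (X n)) sequentially"
  using assms unfolding lscp_def filterlim_iff by blast

lemma isCont_eventually_nhds:
  assumes "isCont g y" "eventually P (nhds (g y))"
  shows "eventually (\<lambda>z. P (g z)) (nhds y)"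
proof -
  have "eventually (\<lambda>z. P (g z)) (at y)"
    using assms unfolding isCont_def filterlim_iff by blast
  hence "eventually (\<lambda>z. z \<noteq> y \<longrightarrow> P (g z)) (nhds y)"
    by (simp add: eventually_at_filter)
  moreover have "P (g y)" using assms(2) eventually_nhds_x_imp_x by blast
  ultimately show ?thesis by (auto elim: eventually_mono)
qed

lemma lscp_compose:
  assumes "lscp f" "\<And>y. isCont g y"
  shows "lscp (\<lambda>x. f (g x))"
  unfolding lscp_def
proof (intro allI impI)
  fix y c assume "ereal c < f (g y)"
  hence "eventually (\<lambda>z. ereal c < f z) (nhds (g y))" using assms(1) unfolding lscp_def by blast
  thus "eventually (\<lambda>z. ereal c < f (g z)) (nhds y)"
    using isCont_eventually_nhds[OF assms(2)] by blast
qed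

lemma lscp_add_cont:
  assumes "lscp f" "\<And>y. isCont g y"
  shows "lscp (\<lambda>x. f x + ereal (g x))"
  unfolding lscp_def
proof (intro allI impI)
  fix y c assume c: "ereal c < f y + ereal (g y)"
  hence "ereal (c - g y) < f y"
    by (cases "f y") auto
  then obtain c' where c': "ereal (c - g y) < ereal c'" "ereal c' < f y"
    using ereal_dense2 by blast
  have e1: "eventually (\<lambda>z. ereal c' < f z) (nhds y)" using assms(1) c' unfolding lscp_def by blast
  have "eventually (\<lambda>r. c - c' < r) (nhds (g y))"
    using c'(1) by (intro order_tendstoD(1)[OF filterlim_ident]) simp
  hence e2: "eventually (\<lambda>z. c - c' < g z) (nhds y)"
    using isCont_eventually_nhds[OF assms(2)] by blast
  show "eventually (\<lambda>z. ereal c < f z + ereal (g z)) (nhds y)"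
    using e1 e2
  proof eventually_elim
    case (elim z) thus ?case by (cases "f z") auto
  qed
qed

lemma lscp_add:
  assumes "lscp f" "lscp g" "\<And>x. f x \<noteq> -\<infinity>" "\<And>x. g x \<noteq> -\<infinity>"
  shows "lscp (\<lambda>x. f x + g x)"
  unfolding lscp_def
proof (intro allI impI)
  fix y c assume c: "ereal c < f y + g y"
  have "\<exists>c1 c2. ereal c1 < f y \<and> ereal c2 < g y \<and> c \<le> c1 + c2"
  proof (cases "f y")
    case (real a) note fa = this
    show ?thesis
    proof (cases "g y")
      case (real b)
      with fa c show ?thesis
        by (intro exI[of _ "a - (a + b - c)/2"] exI[of _ "b - (a + b - c)/2"]) auto
    next
      case PInf
      with fa show ?thesis by (intro exI[of _ "a - 1"] exI[of _ "c - a + 1"]) auto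
    next
      case MInf with assms(4) show ?thesis by auto
    qed
  next
    case PInf note fi = this
    show ?thesis
    proof (cases "g y")
      case (real b)
      with fi show ?thesis by (intro exI[of _ "c - b + 1"] exI[of _ "b - 1"]) auto
    next
      case PInf
      with fi show ?thesis by (intro exI[of _ "c"] exI[of _ "0"]) auto
    next
      case MInf with assms(4) show ?thesis by auto
    qed
  next
    case MInf with assms(3) show ?thesis by auto
  qed
  then obtain c1 c2 where cc: "ereal c1 < f y" "ereal c2 < g y" "c \<le> c1 + c2" by blast
  have e1: "eventually (\<lambda>z. ereal c1 < f z) (nhds y)" using assms(1) cc unfolding lscp_def by blast
  have e2: "eventually (\<lambda>z. ereal c2 < g z) (nhds y)" using assms(2) cc unfolding lscp_def by blast
  show "eventually (\<lambda>z. ereal c < f z + g z) (nhds y)"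
    using e1 e2
  proof eventually_elim
    case (elim z)
    have "ereal c \<le> ereal c1 + ereal c2" using cc by simp
    also have "\<dots> < f z + g z" using elim by (intro ereal_add_strict_mono2) auto
    finally show ?case .
  qed
qed

lemma lscp_scale:
  assumes "lscp f" "t > 0"
  shows "lscp (\<lambda>x. ereal t * f x)"
  unfolding lscp_def
proof (intro allI impI)
  fix y c assume c: "ereal c < ereal t * f y"
  have "ereal (c / t) < f y"
    using c assms(2) by (cases "f y") (auto simp: field_simps)
  hence "eventually (\<lambda>z. ereal (c/t) < f z) (nhds y)" using assms(1) unfolding lscp_def by blast
  thus "eventually (\<lambda>z. ereal c < ereal t * f z) (nhds y)"
  proof eventually_elim
    case (elim z) thus ?case using assms(2) by (cases "f z") (auto simp: field_simps)
  qed
qed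

lemma lscp_attains_min:
  fixes f :: "'a::euclidean_space \<Rightarrow> ereal"
  assumes lsc: "lscp f" and nm: "\<And>x. f x \<noteq> -\<infinity>"
    and coer: "\<And>x. K \<le> norm x \<Longrightarrow> f z \<le> f x"
  shows "\<exists>v. \<forall>u. f v \<le> f u"
proof (rule ccontr)
  assume "\<not> ?thesis"
  hence nomin: "\<And>v. \<exists>u. f u < f v" by (meson not_le)
  define m where "m = (INF x. f x)"
  have mlt: "m < f v" for v
  proof -
    obtain u where "f u < f v" using nomin by blast
    moreover have "m \<le> f u" unfolding m_def by (rule INF_lower) simp
    ultimately show ?thesis by simp
  qed
  define C where "C = cball (0::'a) (max K (norm z) + 1)"
  have "\<forall>y\<in>C. \<exists>c::real. m < ereal c \<and> ereal c < f y" using mlt ereal_dense2 by blast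
  then obtain c where c: "\<And>y. y\<in>C \<Longrightarrow> m < ereal (c y) \<and> ereal (c y) < f y" by metis
  have "\<forall>y\<in>C. \<exists>S. open S \<and> y \<in> S \<and> (\<forall>x\<in>S. ereal (c y) < f x)"
    using lsc c unfolding lscp_def eventually_nhds by blast
  then obtain S where S: "\<And>y. y\<in>C \<Longrightarrow> open (S y) \<and> y \<in> S y \<and> (\<forall>x\<in>S y. ereal (c y) < f x)"
    by metis
  have "compact C" by (simp add: C_def)
  moreover have "C \<subseteq> (\<Union>y\<in>C. S y)" using S by blast
  ultimately obtain D where D: "D \<subseteq> C" "finite D" "C \<subseteq> (\<Union>y\<in>D. S y)"
    using compactE_image[of C C S] S by blast
  have zC: "z \<in> C" by (simp add: C_def)
  hence Dne: "D \<noteq> {}" using D by blast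
  define c0 where "c0 = Min (c ` D)"
  have "c0 \<in> c ` D" using D Dne by (simp add: c0_def)
  hence mc0: "m < ereal c0" using c D by auto
  have inC: "ereal c0 < f x" if xC: "x \<in> C" for x
  proof -
    obtain y where y: "y \<in> D" "x \<in> S y" using D xC by blast
    have "c0 \<le> c y" using D y by (simp add: c0_def)
    moreover have "ereal (c y) < f x" using S y D by blast
    ultimately show ?thesis by (meson ereal_less_eq(3) order_le_less_trans)
  qed
  have "ereal c0 \<le> f x" for x
  proof (cases "x \<in> C")
    case True thus ?thesis using inC by (simp add: less_imp_le)
  next
    case False
    hence "K \<le> norm x" by (auto simp: C_def)
    hence "f z \<le> f x" by (rule coer)
    moreover have "ereal c0 < f z" using inC zC by blast
    ultimately show ?thesis by simp
  qed
  hence "ereal c0 \<le> m" unfolding m_def by (rule INF_greatest)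
  with mc0 show False by simp
qed


locale leg =
  fixes H :: "'a::euclidean_space \<Rightarrow> ereal"
  assumes legH: "legendre H"
begin

abbreviation "F \<equiv> fenchel_conj H"

lemma H_nm: "H x \<noteq> -\<infinity>"
  using legH unfolding legendre_def Gamma0_def proper_fun_def by blast

lemma H_dom: "\<exists>p0. H p0 \<noteq> \<infinity>"
  using legH unfolding legendre_def Gamma0_def proper_fun_def edom_def by auto

lemma H_lscp: "lscp H"
  using legH lsc_fun_lscp unfolding legendre_def Gamma0_def by blast

lemma F_ge: "ereal (inner q y) - H q \<le> F y"
  unfolding fenchel_conj_def by (rule SUP_upper) simp

lemma F_ge_real: "H q = ereal hq \<Longrightarrow> ereal (inner q y - hq) \<le> F y"
  using F_ge[of q y] by simp

lemma F_nm: "F y \<noteq> -\<infinity>"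
proof -
  obtain p0 where "H p0 \<noteq> \<infinity>" using H_dom by blast
  then obtain h where "H p0 = ereal h" using H_nm[of p0] by (cases "H p0") auto
  thus ?thesis using F_ge_real[of p0 h y] by auto
qed

lemma F_lscp: "lscp F"
  unfolding lscp_def
proof (intro allI impI)
  fix y c assume "ereal c < F y"
  then obtain q where q: "ereal c < ereal (inner q y) - H q"
    unfolding fenchel_conj_def by (auto simp: less_SUP_iff)
  then obtain h where h: "H q = ereal h" using H_nm[of q] by (cases "H q") auto
  with q have "c + h < inner q y" by simp
  hence "eventually (\<lambda>z. c + h < inner q z) (nhds y)"
    by (intro order_tendstoD(1)) (auto intro!: tendsto_intros simp: filterlim_ident)
  thus "eventually (\<lambda>z. ereal c < F z) (nhds y)"
  proof eventually_elim
    case (elim z)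
    hence "ereal c < ereal (inner q z - h)" by simp
    also have "\<dots> \<le> F z" using F_ge_real[OF h] .
    finally show ?case .
  qed
qed

lemma key:
  assumes "H q = ereal hq" "F a = ereal (inner q a - hq)"
  shows "q \<in> interior (edom H) \<and> a = egrad H q"
proof -
  have "a \<in> subdiff H q"
    unfolding subdiff_def
  proof (intro CollectI conjI allI)
    show "q \<in> edom H" using assms by (simp add: edom_def)
    fix y
    show "H q + ereal (inner a (y - q)) \<le> H y"
    proof (cases "H y")
      case (real hy)
      have "ereal (inner y a - hy) \<le> F a" using F_ge_real[OF real] .
      hence "inner y a - hy \<le> inner q a - hq" using assms by simp
      thus ?thesis using assms real by (simp add: inner_diff_right inner_commute)
    qed (use H_nm in auto)
  qed
  moreover have "q \<in> edom H" using assms by (simp add: edom_def)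
  ultimately have qi: "q \<in> interior (edom H)"
    using legH unfolding legendre_def by blast
  hence "subdiff H q = {egrad H q}" using legH unfolding legendre_def by blast
  with qi \<open>a \<in> subdiff H q\<close> show ?thesis by blast
qed

definition att :: "'a \<Rightarrow> 'a \<Rightarrow> bool" where
  "att w q \<longleftrightarrow> H q \<noteq> \<infinity> \<and> F w = ereal (inner q w) - H q"

lemma att_real:
  assumes "att w q"
  obtains hq where "H q = ereal hq" "F w = ereal (inner q w - hq)"
  using assms H_nm[of q] unfolding att_def by (cases "H q") auto

lemma att_key: "att w q \<Longrightarrow> q \<in> interior (edom H) \<and> w = egrad H q"
  by (metis att_real key)

lemma att_unique:
  assumes "att w q1" "att w q2" shows "q1 = q2"
proof (rule ccontr)
  assume ne: "q1 \<noteq> q2"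
  obtain h1 where h1: "H q1 = ereal h1" "F w = ereal (inner q1 w - h1)" using att_real[OF assms(1)] .
  obtain h2 where h2: "H q2 = ereal h2" "F w = ereal (inner q2 w - h2)" using att_real[OF assms(2)] .
  have i1: "q1 \<in> interior (edom H)" and i2: "q2 \<in> interior (edom H)"
    using att_key assms by blast+
  define qm where "qm = (1 - 1/2) *\<^sub>R q1 + (1/2::real) *\<^sub>R q2"
  have sc: "strictly_convex_on_set (interior (edom H)) H"
    using legH unfolding legendre_def by blast
  have "H qm < ereal (1 - 1/2) * H q1 + ereal (1/2) * H q2"
    unfolding qm_def
    by (rule sc[unfolded strictly_convex_on_set_def, rule_format]) (use i1 i2 ne in auto)
  hence lt: "H qm < ereal (h1/2 + h2/2)" using h1 h2 by simp
  then obtain hm where hm: "H qm = ereal hm" using H_nm[of qm] by (cases "H qm") auto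
  have "ereal (inner qm w - hm) \<le> F w" using F_ge_real[OF hm] .
  moreover have "inner qm w = inner q1 w / 2 + inner q2 w / 2"
    unfolding qm_def by (simp add: inner_add_left)
  ultimately show False using lt hm h1 h2 by simp
qed

lemma F_real: "F y \<noteq> \<infinity> \<Longrightarrow> F y = ereal (real_of_ereal (F y))"
  using F_nm[of y] by (cases "F y") auto

lemma coer:
  assumes "w \<in> interior (edom F)"
  obtains a C where "a > 0" "\<And>q. ereal (inner q w + 2*a*norm q - C) \<le> H q"
proof -
  obtain e where e: "e > 0" "ball w e \<subseteq> edom F" using assms mem_interior by blast
  define d where "d = e/2"
  have d: "d > 0" "d < e" using e by (auto simp: d_def)
  define val where "val b s = real_of_ereal (F (w + (s*d) *\<^sub>R b))" for b s
  have Fval: "F (w + (s*d) *\<^sub>R b) = ereal (val b s)" if "b \<in> Basis" "\<bar>s\<bar> = 1" for b s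
  proof -
    have "w + (s*d) *\<^sub>R b \<in> ball w e" using that d by (auto simp: dist_norm abs_mult)
    hence "F (w + (s*d) *\<^sub>R b) \<noteq> \<infinity>" using e unfolding edom_def by auto
    thus ?thesis unfolding val_def by (rule F_real)
  qed
  define C0 where "C0 = (\<Sum>b\<in>Basis. \<bar>val b 1\<bar> + \<bar>val b (-1)\<bar>)"
  have valC: "val b s \<le> C0" if "b \<in> Basis" "\<bar>s\<bar> = 1" for b s
  proof -
    have "val b s \<le> \<bar>val b 1\<bar> + \<bar>val b (-1)\<bar>" using that by (cases "s = 1") (auto simp: abs_if split: if_splits)
    also have "\<dots> \<le> C0" unfolding C0_def using that(1)
      by (intro member_le_sum) auto
    finally show ?thesis .
  qed
  define a where "a = d / (2 * DIM('a))"
  have apos: "a > 0" using d by (simp add: a_def)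
  have main: "ereal (inner q w + 2*a*norm q - C0) \<le> H q" for q
  proof (cases "H q")
    case (real hq)
    have each: "inner q w + d * \<bar>inner q b\<bar> - C0 \<le> hq" if b: "b \<in> Basis" for b
    proof -
      define s where "s = (if inner q b \<ge> 0 then 1 else -1::real)"
      have s1: "\<bar>s\<bar> = 1" by (simp add: s_def)
      have "ereal (inner q (w + (s*d) *\<^sub>R b) - hq) \<le> F (w + (s*d) *\<^sub>R b)" using F_ge_real[OF real] .
      hence "inner q (w + (s*d) *\<^sub>R b) - hq \<le> val b s" using Fval[OF b s1] by simp
      moreover have "inner q (w + (s*d) *\<^sub>R b) = inner q w + d * \<bar>inner q b\<bar>"
        by (auto simp: s_def inner_add_right abs_if)
      ultimately show ?thesis using valC[OF b s1] by linarith
    qed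
    have "(\<Sum>b\<in>Basis. inner q w + d * \<bar>inner q b\<bar> - C0) \<le> (\<Sum>b\<in>(Basis::'a set). hq)"
      using each by (intro sum_mono) auto
    hence "DIM('a) * inner q w + d * (\<Sum>b\<in>Basis. \<bar>inner q b\<bar>) - DIM('a) * C0 \<le> DIM('a) * hq"
      by (simp add: sum.distrib sum_subtractf sum_distrib_left)
    moreover have "norm q \<le> (\<Sum>b\<in>Basis. \<bar>inner q b\<bar>)" by (rule norm_le_l1)
    ultimately have "DIM('a) * inner q w + d * norm q - DIM('a) * C0 \<le> DIM('a) * hq"
      using d by (smt (verit) mult_left_mono)
    hence "DIM('a) * (inner q w + 2*a*norm q - C0) \<le> DIM('a) * hq"
      by (simp add: a_def algebra_simps)
    hence "inner q w + 2*a*norm q - C0 \<le> hq" by simp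
    thus ?thesis using real by simp
  qed (use H_nm in auto)
  show ?thesis using that apos main by blast
qed

lemma att_exists:
  assumes "w \<in> interior (edom F)" shows "\<exists>q. att w q"
proof -
  obtain a C where a: "a > 0" "\<And>q. ereal (inner q w + 2*a*norm q - C) \<le> H q"
    using coer[OF assms] by blast
  obtain p0 where "H p0 \<noteq> \<infinity>" using H_dom by blast
  then obtain h0 where h0: "H p0 = ereal h0" using H_nm[of p0] by (cases "H p0") auto
  define f where "f q = H q + ereal (- inner q w)" for q
  have lf: "lscp f" unfolding f_def
    by (rule lscp_add_cont[OF H_lscp]) (intro continuous_intros)
  have nm: "f q \<noteq> -\<infinity>" for q using H_nm[of q] by (cases "H q") (auto simp: f_def)
  define K where "K = (h0 - inner p0 w + C) / (2*a)"
  have co: "f p0 \<le> f q" if "K \<le> norm q" for q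
  proof (cases "H q")
    case (real hq)
    have "inner q w + 2*a*norm q - C \<le> hq" using a(2)[of q] real by simp
    moreover have "2*a*K \<le> 2*a*norm q" using that a by simp
    moreover have "2*a*K = h0 - inner p0 w + C" using a by (simp add: K_def)
    ultimately show ?thesis using real h0 by (simp add: f_def)
  qed (use H_nm h0 in \<open>auto simp: f_def\<close>)
  obtain q where q: "\<And>u. f q \<le> f u" using lscp_attains_min[OF lf nm co] by blast
  have "f q \<le> f p0" by (rule q)
  hence "H q \<noteq> \<infinity>" using h0 by (auto simp: f_def)
  then obtain hq where hq: "H q = ereal hq" using H_nm[of q] by (cases "H q") auto
  have "F w \<le> ereal (inner q w - hq)"
    unfolding fenchel_conj_def
  proof (rule SUP_least)
    fix y
    show "ereal (inner y w) - H y \<le> ereal (inner q w - hq)"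
    proof (cases "H y")
      case (real hy)
      have "f q \<le> f y" by (rule q)
      thus ?thesis using real hq by (simp add: f_def)
    qed (use H_nm in auto)
  qed
  moreover have "ereal (inner q w - hq) \<le> F w" by (rule F_ge_real[OF hq])
  ultimately have "F w = ereal (inner q w) - H q" using hq by simp
  hence "att w q" using hq unfolding att_def by simp
  thus ?thesis by blast
qed

definition G :: "'a \<Rightarrow> 'a" where "G w = (SOME q. att w q)"

lemma G_att: "w \<in> interior (edom F) \<Longrightarrow> att w (G w)"
  unfolding G_def using att_exists by (rule someI_ex)

lemma F_deriv:
  assumes wU: "w \<in> interior (edom F)"
  shows "GDERIV (\<lambda>y. real_of_ereal (F y)) w :> G w"
proof -
  define p where "p = G w"
  have attp: "att w p" using G_att[OF wU] by (simp add: p_def)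
  obtain hp where hp: "H p = ereal hp" "F w = ereal (inner p w - hp)" using att_real[OF attp] .
  obtain a C where a: "a > 0" "\<And>q. ereal (inner q w + 2*a*norm q - C) \<le> H q"
    using coer[OF wU] by blast
  obtain e where e: "e > 0" "ball w e \<subseteq> interior (edom F)"
    using wU open_interior open_contains_ball by blast
  define d0 where "d0 = min a e"
  have d0: "d0 > 0" using a e by (simp add: d0_def)
  have inU: "w + h \<in> interior (edom F)" if "norm h < d0" for h
    using that e by (auto simp: d0_def dist_norm intro!: subsetD[OF e(2)])
  define Fr where "Fr y = real_of_ereal (F y)" for y
  have bnd: "\<bar>Fr (w+h) - Fr w - inner h p\<bar> \<le> norm h * norm (G (w+h) - p)"
    if h: "norm h < d0" for h
  proof -
    have at: "att (w+h) (G (w+h))" using G_att[OF inU[OF h]] .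
    obtain hq where hq: "H (G (w+h)) = ereal hq" "F (w+h) = ereal (inner (G (w+h)) (w+h) - hq)"
      using att_real[OF at] .
    have i1: "ereal (inner p (w+h) - hp) \<le> F (w+h)" by (rule F_ge_real[OF hp(1)])
    have i2: "ereal (inner (G (w+h)) w - hq) \<le> F w" by (rule F_ge_real[OF hq(1)])
    have fr: "Fr (w+h) = inner (G (w+h)) (w+h) - hq" "Fr w = inner p w - hp"
      using hq hp by (simp_all add: Fr_def)
    have lo: "0 \<le> Fr (w+h) - Fr w - inner h p"
      using i1 fr hq hp by (simp add: inner_add_right inner_commute)
    have i2': "inner (G (w+h)) w - hq \<le> inner p w - hp" using i2 hp by simp
    have e1: "inner (G (w+h)) (w+h) = inner (G (w+h)) w + inner (G (w+h)) h"
      by (simp add: inner_add_right)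
    have e2: "inner (G (w+h) - p) h = inner (G (w+h)) h - inner p h" by (simp add: inner_diff_left)
    have e3: "inner h p = inner p h" by (rule inner_commute)
    have "Fr (w+h) - Fr w - inner h p \<le> inner (G (w+h) - p) h"
      using fr i2' e1 e2 e3 by linarith
    also have "\<dots> \<le> norm h * norm (G (w+h) - p)"
      using Cauchy_Schwarz_ineq2[of "G (w+h) - p" h] by (simp add: mult.commute)
    finally show ?thesis using lo by simp
  qed
  have cont: "\<exists>d>0. \<forall>h. norm h < d \<longrightarrow> norm (G (w+h) - p) < \<epsilon>" if eps: "\<epsilon> > 0" for \<epsilon>
  proof (rule ccontr)
    assume "\<not> ?thesis"
    hence "\<forall>d>0. \<exists>h. norm h < d \<and> \<epsilon> \<le> norm (G (w+h) - p)" by (meson not_le)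
    hence "\<forall>n. \<exists>h. norm h < min d0 (1 / Suc n) \<and> \<epsilon> \<le> norm (G (w+h) - p)"
    proof (intro allI)
      fix n assume A: "\<forall>d>0. \<exists>h. norm h < d \<and> \<epsilon> \<le> norm (G (w+h) - p)"
      have "min d0 (1 / Suc n) > 0" using d0 by simp
      thus "\<exists>h. norm h < min d0 (1 / Suc n) \<and> \<epsilon> \<le> norm (G (w+h) - p)" using A by blast
    qed
    then obtain hs where hs: "\<And>n. norm (hs n) < min d0 (1 / Suc n)"
      "\<And>n. \<epsilon> \<le> norm (G (w + hs n) - p)" by metis
    define qs where "qs n = G (w + hs n)" for n
    have hs0: "hs \<longlonglongrightarrow> 0"
      by (rule LIMSEQ_norm_0) (use hs(1) in \<open>auto simp: less_imp_le\<close>)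
    have hsd: "norm (hs n) < d0" for n using hs(1)[of n] by simp
    have att_n: "att (w + hs n) (qs n)" for n unfolding qs_def using G_att[OF inU[OF hsd]] .
    define hq where "hq n = real_of_ereal (H (qs n))" for n
    have hqe: "H (qs n) = ereal (hq n)" for n
      using att_n[of n] H_nm[of "qs n"] unfolding att_def hq_def by (cases "H (qs n)") auto
    have Fn: "F (w + hs n) = ereal (inner (qs n) (w + hs n) - hq n)" for n
      using att_n[of n] hqe[of n] unfolding att_def by simp
    have ineq1: "inner p (w + hs n) - hp \<le> inner (qs n) (w + hs n) - hq n" for n
      using F_ge_real[OF hp(1), of "w + hs n"] Fn[of n] by simp
    have ineq2: "inner (qs n) w + 2*a*norm (qs n) - C \<le> hq n" for n
      using a(2)[of "qs n"] hqe[of n] by simp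
    define B0 where "B0 = C + \<bar>inner p w\<bar> + a * norm p + \<bar>hp\<bar>"
    have qbound: "norm (qs n) \<le> B0 / a" for n
    proof -
      have ha: "norm (hs n) \<le> a" using hsd[of n] by (simp add: d0_def)
      have "\<bar>inner (qs n) (hs n)\<bar> \<le> norm (qs n) * norm (hs n)" by (rule Cauchy_Schwarz_ineq2)
      also have "\<dots> \<le> norm (qs n) * a" using ha by (intro mult_left_mono) auto
      finally have c1: "\<bar>inner (qs n) (hs n)\<bar> \<le> a * norm (qs n)" by (simp add: mult.commute)
      have "\<bar>inner p (hs n)\<bar> \<le> norm p * norm (hs n)" by (rule Cauchy_Schwarz_ineq2)
      also have "\<dots> \<le> norm p * a" using ha by (intro mult_left_mono) auto
      finally have c2: "\<bar>inner p (hs n)\<bar> \<le> a * norm p" by (simp add: mult.commute)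
      have "a * norm (qs n) \<le> B0"
        using ineq1[of n] ineq2[of n] c1 c2 unfolding B0_def
        by (simp add: inner_add_right)
      thus ?thesis using a(1) by (simp add: field_simps)
    qed
    have "bounded (range qs)" unfolding bounded_iff using qbound by blast
    then obtain l r where lr: "strict_mono r" "(qs \<circ> r) \<longlonglongrightarrow> l"
      using bounded_imp_convergent_subsequence by blast
    have lr': "(\<lambda>n. qs (r n)) \<longlonglongrightarrow> l" using lr(2) by (simp add: o_def)
    have hsr: "(\<lambda>n. hs (r n)) \<longlonglongrightarrow> 0" using LIMSEQ_subseq_LIMSEQ[OF hs0 lr(1)] by (simp add: o_def)
    have "(\<lambda>n. norm (qs (r n) - p)) \<longlonglongrightarrow> norm (l - p)" by (intro tendsto_intros lr')
    moreover have "\<epsilon> \<le> norm (qs (r n) - p)" for n using hs(2)[of "r n"] by (simp add: qs_def)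
    ultimately have lfar: "\<epsilon> \<le> norm (l - p)" by (intro LIMSEQ_le_const) auto
    define c where "c = hp - inner p w + inner l w"
    have Hl: "H l \<le> ereal c"
    proof (rule ccontr)
      assume "\<not> H l \<le> ereal c"
      hence "ereal c < H l" by simp
      then obtain c' where c': "ereal c < ereal c'" "ereal c' < H l" using ereal_dense2 by blast
      have ev1: "eventually (\<lambda>n. ereal c' < H (qs (r n))) sequentially"
        using lscp_seq[OF H_lscp lr' c'(2)] .
      define s where "s n = hp - inner p (w + hs (r n)) + inner (qs (r n)) (w + hs (r n))" for n
      have "s \<longlonglongrightarrow> hp - inner p (w + 0) + inner l (w + 0)"
        unfolding s_def by (intro tendsto_intros lr' hsr)
      hence "s \<longlonglongrightarrow> c" by (simp add: c_def)
      hence ev2: "eventually (\<lambda>n. s n < c') sequentially" using c'(1) by (intro order_tendstoD(2)) auto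
      have "eventually (\<lambda>n. False) sequentially"
        using ev1 ev2
      proof eventually_elim
        case (elim n)
        have "hq (r n) \<le> s n" using ineq1[of "r n"] by (simp add: s_def)
        thus ?case using elim hqe[of "r n"] by simp
      qed
      thus False by simp
    qed
    then obtain hl where hl: "H l = ereal hl" using H_nm[of l] by (cases "H l") auto
    have "ereal (inner l w - hl) \<le> F w" by (rule F_ge_real[OF hl])
    moreover have "inner p w - hp \<le> inner l w - hl" using Hl hl by (simp add: c_def)
    ultimately have "F w = ereal (inner l w - hl)" using hp by simp
    hence "att w l" using hl unfolding att_def by simp
    hence "l = p" using att_unique attp by blast
    thus False using lfar eps by simp
  qed
  show ?thesis
    unfolding gderiv_def has_derivative_at'
  proof (intro conjI allI impI bounded_linear_inner_left)
    fix \<epsilon> :: real assume eps: "\<epsilon> > 0"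
    obtain d where d: "d > 0" "\<And>h. norm h < d \<Longrightarrow> norm (G (w+h) - p) < \<epsilon>" using cont[OF eps] by blast
    show "\<exists>d>0. \<forall>x'. 0 < norm (x' - w) \<and> norm (x' - w) < d \<longrightarrow>
        norm (real_of_ereal (F x') - real_of_ereal (F w) - inner (x' - w) (G w)) / norm (x' - w) < \<epsilon>"
    proof (intro exI[of _ "min d d0"] conjI allI impI)
      show "min d d0 > 0" using d d0 by simp
      fix x' assume x': "0 < norm (x' - w) \<and> norm (x' - w) < min d d0"
      define h where "h = x' - w"
      have xe: "x' = w + h" by (simp add: h_def)
      have "\<bar>Fr (w+h) - Fr w - inner h p\<bar> \<le> norm h * norm (G (w+h) - p)"
        using x' by (intro bnd) (simp add: h_def)
      also have "\<dots> < norm h * \<epsilon>" using d(2)[of h] x' by (simp add: h_def)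
      finally have "\<bar>Fr (w+h) - Fr w - inner h p\<bar> / norm h < \<epsilon>"
        using x' by (simp add: h_def field_simps)
      thus "norm (real_of_ereal (F x') - real_of_ereal (F w) - inner (x' - w) (G w)) / norm (x' - w) < \<epsilon>"
        by (simp add: xe Fr_def p_def)
    qed
  qed
qed

lemma egrad_F:
  assumes "w \<in> interior (edom F)" shows "egrad F w = G w"
proof -
  have d: "GDERIV (\<lambda>y. real_of_ereal (F y)) w :> G w" by (rule F_deriv[OF assms])
  show ?thesis unfolding egrad_def
  proof (rule the_equality)
    show "GDERIV (\<lambda>y. real_of_ereal (F y)) w :> G w" by (rule d)
    fix D assume D: "GDERIV (\<lambda>y. real_of_ereal (F y)) w :> D"
    have "(\<lambda>h. inner h D) = (\<lambda>h. inner h (G w))"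
      using has_derivative_unique D d unfolding gderiv_def by blast
    hence "inner (D - G w) D = inner (D - G w) (G w)" by metis
    hence "inner (D - G w) (D - G w) = 0" by (simp add: inner_diff_right)
    thus "D = G w" by simp
  qed
qed

end


locale main = leg H for H :: "'a::euclidean_space \<Rightarrow> ereal" +
  fixes J :: "'a \<Rightarrow> ereal" and v0 :: 'a and t :: "nat \<Rightarrow> real" and x :: "nat \<Rightarrow> 'a"
  assumes A1_J: "Gamma0 J" and A1_coercive: "one_coercive J"
    and A2_v0: "v0 \<in> interior (edom (fenchel_conj H))"
    and A2_tpos: "\<And>k. t k > 0"
    and A2_tlim: "filterlim t at_top sequentially"
    and A2_xlim: "(\<lambda>k. x k /\<^sub>R t k) \<longlonglongrightarrow> v0"
    and A2_dom: "\<And>k. x k - t k *\<^sub>R v0 \<in> edom J"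
    and A2_bdd: "\<exists>M. \<forall>k. J (x k - t k *\<^sub>R v0) / ereal (t k) \<le> ereal M"
begin

abbreviation "U \<equiv> interior (edom F)"

lemma J_nm: "J y \<noteq> -\<infinity>"
  using A1_J unfolding Gamma0_def proper_fun_def by blast

lemma J_lscp: "lscp J"
  using A1_J lsc_fun_lscp unfolding Gamma0_def by blast

lemma J_conv:
  assumes "J a = ereal ja" "J b = ereal jb" "0 \<le> s" "s \<le> 1"
  shows "J ((1-s) *\<^sub>R a + s *\<^sub>R b) \<le> ereal ((1-s)*ja + s*jb)"
proof -
  have cv: "convex (epigraph J)" using A1_J unfolding Gamma0_def convex_fun_def by blast
  have "(a, ja) \<in> epigraph J" "(b, jb) \<in> epigraph J" using assms by (auto simp: epigraph_def)
  hence "(1-s) *\<^sub>R (a, ja) + s *\<^sub>R (b, jb) \<in> epigraph J"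
    using assms by (intro convexD[OF cv]) auto
  thus ?thesis by (simp add: epigraph_def)
qed

lemma J_coer: "\<exists>R>0. \<forall>y. R \<le> norm y \<longrightarrow> ereal (c * norm y) \<le> J y"
proof -
  have "eventually (\<lambda>y::'a. ereal c < J y / ereal (norm y)) at_infinity"
    using A1_coercive unfolding one_coercive_def tendsto_PInfty by blast
  then obtain b where b: "\<And>y. b \<le> norm y \<Longrightarrow> ereal c < J y / ereal (norm y)"
    unfolding eventually_at_infinity by blast
  have "\<forall>y::'a. max b 1 \<le> norm y \<longrightarrow> ereal (c * norm y) \<le> J y"
  proof (intro allI impI)
    fix y :: 'a assume y: "max b 1 \<le> norm y"
    hence n: "norm y > 0" "b \<le> norm y" by auto
    have lt: "ereal c < J y / ereal (norm y)" using b n by blast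
    show "ereal (c * norm y) \<le> J y"
    proof (cases "J y")
      case (real jy)
      hence "c < jy / norm y" using lt n by simp
      hence "c * norm y < jy" using n by (simp add: field_simps)
      thus ?thesis using real by simp
    qed (use J_nm in auto)
  qed
  thus ?thesis by (intro exI[of _ "max b 1"]) auto
qed

lemma F_U_real: "w \<in> U \<Longrightarrow> F w = ereal (real_of_ereal (F w))"
  using interior_subset[of "edom F"] F_real unfolding edom_def by auto

lemma p0_ex: "\<exists>p0 h0. H p0 = ereal h0"
  using H_dom H_nm by (metis ereal_cases)

definition phi :: "nat \<Rightarrow> 'a \<Rightarrow> ereal" where
  "phi k v = J (x k - t k *\<^sub>R v) + ereal (t k) * F v"

lemma tF_nm: "ereal (t k) * F v \<noteq> -\<infinity>"
  using F_nm[of v] A2_tpos[of k] by (cases "F v") auto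

lemma phi_v0: "\<exists>r. phi k v0 = ereal r"
proof -
  have "J (x k - t k *\<^sub>R v0) \<noteq> \<infinity>" using A2_dom[of k] by (simp add: edom_def)
  then obtain j where j: "J (x k - t k *\<^sub>R v0) = ereal j" using J_nm by (metis ereal_cases)
  obtain f where f: "F v0 = ereal f" using F_U_real[OF A2_v0] by blast
  show ?thesis using j f by (simp add: phi_def)
qed

lemma phi_min: "\<exists>v. \<forall>u. phi k v \<le> phi k u"
proof -
  let ?t = "t k" and ?x = "x k"
  have tp: "?t > 0" by (rule A2_tpos)
  have lf: "lscp (phi k)"
    unfolding phi_def
  proof (rule lscp_add)
    show "lscp (\<lambda>v. J (?x - ?t *\<^sub>R v))"
      by (rule lscp_compose[OF J_lscp]) (intro continuous_intros)
    show "lscp (\<lambda>v. ereal ?t * F v)" by (rule lscp_scale[OF F_lscp tp])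
  qed (use J_nm tF_nm in auto)
  have nm: "phi k v \<noteq> -\<infinity>" for v
    using J_nm[of "?x - ?t *\<^sub>R v"] tF_nm[of k v] by (cases "J (?x - ?t *\<^sub>R v)"; cases "ereal ?t * F v") (auto simp: phi_def)
  obtain P0 where P0: "phi k v0 = ereal P0" using phi_v0 by blast
  obtain p0 h0 where h0: "H p0 = ereal h0" using p0_ex by blast
  define c where "c = norm p0 + 1"
  obtain R where R: "R > 0" "\<And>y. R \<le> norm y \<Longrightarrow> ereal (c * norm y) \<le> J y" using J_coer[of c] by blast
  define K where "K = max ((R + norm ?x) / ?t) ((\<bar>P0\<bar> + c * norm ?x + ?t * \<bar>h0\<bar>) / ?t) + 1"
  have co: "phi k v0 \<le> phi k v" if vK: "K \<le> norm v" for v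
  proof -
    define y where "y = ?x - ?t *\<^sub>R v"
    have K1: "(R + norm ?x) / ?t < norm v" using vK unfolding K_def by linarith
    have K2: "(\<bar>P0\<bar> + c * norm ?x + ?t * \<bar>h0\<bar>) / ?t < norm v" using vK unfolding K_def by linarith
    have tv: "?t * norm v = norm (?t *\<^sub>R v)" using tp by simp
    have "?t *\<^sub>R v = ?x - y" by (simp add: y_def)
    hence tv2: "?t * norm v \<le> norm ?x + norm y" using tv norm_triangle_ineq4[of ?x y] by simp
    have "R + norm ?x < ?t * norm v" using K1 tp by (simp add: field_simps)
    hence yR: "R \<le> norm y" using tv2 by simp
    have Jy: "ereal (c * norm y) \<le> J y" using R(2)[OF yR] .
    have K2': "\<bar>P0\<bar> + c * norm ?x + ?t * \<bar>h0\<bar> < ?t * norm v" using K2 tp by (simp add: field_simps)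
    show ?thesis
    proof (cases "J y")
      case (real jy)
      show ?thesis
      proof (cases "F v")
        case (real fv)
        have Fv: "p0 \<bullet> v - h0 \<le> fv" using F_ge_real[OF h0, of v] real by simp
        have "- (norm p0 * norm v) \<le> p0 \<bullet> v"
          using Cauchy_Schwarz_ineq2[of p0 v] by linarith
        hence "- (norm p0 * norm v) - h0 \<le> fv" using Fv by linarith
        hence "?t * (- (norm p0 * norm v) - h0) \<le> ?t * fv" using tp by (intro mult_left_mono) auto
        moreover have "c * (?t * norm v - norm ?x) \<le> c * norm y"
          using tv2 by (intro mult_left_mono) (auto simp: c_def)
        hence "c * (?t * norm v) - c * norm ?x \<le> c * norm y" by (simp add: right_diff_distrib)
        moreover have "c * norm y \<le> jy" using Jy \<open>J y = ereal jy\<close> by simp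
        ultimately have "?t * norm v - c * norm ?x - ?t * h0 \<le> jy + ?t * fv"
          by (simp add: c_def algebra_simps)
        moreover have "P0 \<le> ?t * norm v - c * norm ?x - ?t * h0"
          using K2' tp by (smt (verit) mult_left_mono abs_ge_self abs_ge_zero)
        ultimately have "P0 \<le> jy + ?t * fv" by linarith
        thus ?thesis using P0 real \<open>J y = ereal jy\<close> by (simp add: phi_def y_def)
      next
        case PInf
        thus ?thesis using \<open>J y = ereal jy\<close> tp by (simp add: phi_def y_def)
      qed (use F_nm in auto)
    next
      case PInf
      thus ?thesis using tF_nm[of k v] by (simp add: phi_def y_def)
    qed (use J_nm in auto)
  qed
  show ?thesis by (rule lscp_attains_min[OF lf nm co])
qed

definition vk :: "nat \<Rightarrow> 'a" where "vk k = (SOME v. \<forall>u. phi k v \<le> phi k u)"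

lemma vk_min: "phi k (vk k) \<le> phi k u"
  using someI_ex[OF phi_min[of k]] unfolding vk_def by blast

lemma sum_fin:
  fixes a b :: ereal
  assumes "a \<noteq> -\<infinity>" "b \<noteq> -\<infinity>" "a + b \<le> ereal r"
  shows "a \<noteq> \<infinity> \<and> b \<noteq> \<infinity>"
  using assms by (cases a; cases b) auto

lemma vk_fin:
  obtains j f where "J (x k - t k *\<^sub>R vk k) = ereal j" "F (vk k) = ereal f"
    "phi k (vk k) = ereal (j + t k * f)"
proof -
  obtain r where r: "phi k v0 = ereal r" using phi_v0 by blast
  have le: "J (x k - t k *\<^sub>R vk k) + ereal (t k) * F (vk k) \<le> ereal r"
    using vk_min[of k v0] r by (simp add: phi_def)
  have fin: "J (x k - t k *\<^sub>R vk k) \<noteq> \<infinity> \<and> ereal (t k) * F (vk k) \<noteq> \<infinity>"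
    by (rule sum_fin[OF J_nm tF_nm le])
  then obtain j where j: "J (x k - t k *\<^sub>R vk k) = ereal j" using J_nm by (metis ereal_cases)
  have "F (vk k) \<noteq> \<infinity>" using fin A2_tpos[of k] by auto
  then obtain f where f: "F (vk k) = ereal f" using F_nm by (metis ereal_cases)
  show ?thesis using that j f by (simp add: phi_def)
qed

lemma vk_conv: "vk \<longlonglongrightarrow> v0"
proof -
  obtain M where M: "\<And>k. J (x k - t k *\<^sub>R v0) / ereal (t k) \<le> ereal M" using A2_bdd by blast
  obtain F0 where F0: "F v0 = ereal F0" using F_U_real[OF A2_v0] by blast
  obtain p0 h0 where h0: "H p0 = ereal h0" using p0_ex by blast
  have "convergent (\<lambda>k. x k /\<^sub>R t k)" using A2_xlim by (auto simp: convergent_def)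
  hence "Bseq (\<lambda>k. x k /\<^sub>R t k)" by (rule convergent_imp_Bseq)
  then obtain B where B: "B > 0" "\<And>k. norm (x k /\<^sub>R t k) \<le> B"
    unfolding Bseq_def by blast
  define e where "e k = x k /\<^sub>R t k - vk k" for k
  have xe: "x k - t k *\<^sub>R vk k = t k *\<^sub>R e k" for k
    using A2_tpos[of k] by (simp add: e_def scaleR_diff_right)
  have bound: "\<exists>j f. J (t k *\<^sub>R e k) = ereal j \<and> F (vk k) = ereal f \<and> j + t k * f \<le> t k * (M + F0)" for k
  proof -
    obtain j f where jf: "J (x k - t k *\<^sub>R vk k) = ereal j" "F (vk k) = ereal f"
      "phi k (vk k) = ereal (j + t k * f)" using vk_fin .
    have "J (x k - t k *\<^sub>R v0) \<noteq> \<infinity>" using A2_dom[of k] by (simp add: edom_def)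
    then obtain j0 where j0: "J (x k - t k *\<^sub>R v0) = ereal j0" using J_nm by (metis ereal_cases)
    have tp: "t k > 0" by (rule A2_tpos)
    have "j0 / t k \<le> M" using M[of k] j0 tp by simp
    hence j0M: "j0 \<le> t k * M" using tp by (simp add: field_simps)
    have "j + t k * f \<le> j0 + t k * F0" using vk_min[of k v0] jf j0 F0 by (simp add: phi_def)
    hence "j + t k * f \<le> t k * (M + F0)" using j0M by (simp add: algebra_simps)
    thus ?thesis using jf xe by metis
  qed
  have main: "eventually (\<lambda>k. norm (e k) < \<epsilon>) sequentially" if eps: "\<epsilon> > 0" for \<epsilon>
  proof -
    define K' where "K' = max 1 (M + F0 + \<bar>h0\<bar> + norm p0 * B)"
    have K'pos: "K' > 0" by (simp add: K'_def)
    define c where "c = norm p0 + 2 * K' / \<epsilon>"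
    obtain R where R: "R > 0" "\<And>y. R \<le> norm y \<Longrightarrow> ereal (c * norm y) \<le> J y" using J_coer[of c] by blast
    have "eventually (\<lambda>k. (R + 1) / \<epsilon> \<le> t k) sequentially"
      using A2_tlim unfolding filterlim_at_top by blast
    thus ?thesis
    proof eventually_elim
      case (elim k)
      have tp: "t k > 0" by (rule A2_tpos)
      obtain j f where jf: "J (t k *\<^sub>R e k) = ereal j" "F (vk k) = ereal f" "j + t k * f \<le> t k * (M + F0)"
        using bound[of k] by blast
      have nte: "norm (t k *\<^sub>R e k) = t k * norm (e k)" using tp by simp
      show ?case
      proof (cases "R \<le> t k * norm (e k)")
        case True
        hence "ereal (c * (t k * norm (e k))) \<le> J (t k *\<^sub>R e k)" using R(2)[of "t k *\<^sub>R e k"] nte by metis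
        hence Jb: "c * (t k * norm (e k)) \<le> j" using jf by simp
        have Fv: "p0 \<bullet> vk k - h0 \<le> f" using F_ge_real[OF h0, of "vk k"] jf by simp
        have vke: "vk k = x k /\<^sub>R t k - e k" by (simp add: e_def)
        have "norm (vk k) \<le> B + norm (e k)"
          using vke B(2)[of k] norm_triangle_ineq4[of "x k /\<^sub>R t k" "e k"] by simp
        hence "norm p0 * norm (vk k) \<le> norm p0 * (B + norm (e k))" by (intro mult_left_mono) auto
        moreover have "- (norm p0 * norm (vk k)) \<le> p0 \<bullet> vk k"
          using Cauchy_Schwarz_ineq2[of p0 "vk k"] by linarith
        ultimately have "- (norm p0 * (B + norm (e k))) - h0 \<le> f" using Fv by linarith
        hence "t k * (- (norm p0 * (B + norm (e k))) - h0) \<le> t k * f"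
          using tp by (intro mult_left_mono) auto
        hence "t k * (c * norm (e k)) + t k * (- (norm p0 * (B + norm (e k))) - h0) \<le> t k * (M + F0)"
          using Jb jf(3) by (simp add: algebra_simps)
        hence "t k * (c * norm (e k) - norm p0 * (B + norm (e k)) - h0) \<le> t k * (M + F0)"
          by (simp add: algebra_simps)
        hence "c * norm (e k) - norm p0 * (B + norm (e k)) - h0 \<le> M + F0"
          using tp by simp
        hence "(2 * K' / \<epsilon>) * norm (e k) \<le> M + F0 + h0 + norm p0 * B"
          by (simp add: c_def algebra_simps)
        also have "\<dots> \<le> K'" unfolding K'_def by (simp add: abs_if max_def)
        finally have "(2 * K' / \<epsilon>) * norm (e k) \<le> K'" .
        hence "2 * K' * norm (e k) \<le> K' * \<epsilon>" using eps by (simp add: field_simps)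
        hence "K' * (2 * norm (e k)) \<le> K' * \<epsilon>" by (simp add: algebra_simps)
        hence "2 * norm (e k) \<le> \<epsilon>" using K'pos by (simp add: mult_le_cancel_left_pos)
        thus ?thesis using eps by simp
      next
        case False
        hence "t k * norm (e k) < R" by simp
        moreover have "R + 1 \<le> \<epsilon> * t k" using elim eps by (simp add: field_simps)
        ultimately have "t k * norm (e k) < t k * \<epsilon>" by (simp add: mult.commute)
        thus ?thesis using tp by simp
      qed
    qed
  qed
  have e0: "e \<longlonglongrightarrow> 0" unfolding tendsto_iff using main by (simp add: dist_norm)
  have "(\<lambda>k. x k /\<^sub>R t k - e k) \<longlonglongrightarrow> v0 - 0" by (intro tendsto_intros A2_xlim e0)
  thus ?thesis by (simp add: e_def)
qed

lemma opt:
  assumes vU: "vk k \<in> U" and j0: "J (x k - t k *\<^sub>R vk k) = ereal j0"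
  shows "ereal (j0 + inner (G (vk k)) (y - (x k - t k *\<^sub>R vk k))) \<le> J y"
proof (cases "J y")
  case (real jy)
  define v where "v = vk k"
  define tk where "tk = t k"
  define y0 where "y0 = x k - tk *\<^sub>R v"
  define p where "p = G v"
  have tp: "tk > 0" using A2_tpos by (simp add: tk_def)
  define d where "d = (1/tk) *\<^sub>R (y0 - y)"
  have td: "tk *\<^sub>R d = y0 - y" using tp by (simp add: d_def)
  define g where "g s = real_of_ereal (F (v + s *\<^sub>R d))" for s
  have vU': "v \<in> U" using vU by (simp add: v_def)
  have Fd: "((\<lambda>z. real_of_ereal (F z)) has_derivative (\<lambda>h. inner h p)) (at v)"
    using F_deriv[OF vU'] by (simp add: gderiv_def p_def)
  have hv: "((\<lambda>s. v + s *\<^sub>R d) has_derivative (\<lambda>s. s *\<^sub>R d)) (at 0)"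
    by (auto intro!: derivative_eq_intros)
  have Fd': "((\<lambda>z. real_of_ereal (F z)) has_derivative (\<lambda>h. inner h p)) (at ((\<lambda>s. v + s *\<^sub>R d) 0))"
    using Fd by simp
  have "(g has_derivative (\<lambda>s. inner (s *\<^sub>R d) p)) (at 0)"
    unfolding g_def using has_derivative_compose[OF hv Fd'] by simp
  moreover have "(\<lambda>s. inner (s *\<^sub>R d) p) = (*) (inner d p)" by (auto simp: fun_eq_iff)
  ultimately have "DERIV g 0 :> inner d p" by (simp add: has_field_derivative_def)
  hence lim0: "((\<lambda>h. (g (0 + h) - g 0) / h) \<longlongrightarrow> inner d p) (at 0)" by (simp add: DERIV_def)
  have limr: "((\<lambda>s. (g s - g 0) / s) \<longlongrightarrow> inner d p) (at_right 0)"
    using tendsto_mono[OF at_le[of "{0<..}" UNIV] lim0] by simp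
  hence limr2: "((\<lambda>s. - tk * ((g s - g 0) / s)) \<longlongrightarrow> - tk * inner d p) (at_right 0)"
    by (intro tendsto_intros)
  obtain e where e: "e > 0" "ball v e \<subseteq> U" using vU' open_interior open_contains_ball by blast
  define b where "b = min 1 (e / (norm d + 1))"
  have "norm d + 1 > 0" by (simp add: add_nonneg_pos)
  hence bpos: "b > 0" using e by (simp add: b_def)
  have ev: "eventually (\<lambda>s. s \<in> {0<..<b}) (at_right 0)" using eventually_at_right_real[OF bpos] .
  have "eventually (\<lambda>s. - tk * ((g s - g 0) / s) \<le> jy - j0) (at_right (0::real))"
    using ev
  proof eventually_elim
    case (elim s)
    hence s: "0 < s" "s < 1" "s < e / (norm d + 1)" by (auto simp: b_def)
    have "norm (s *\<^sub>R d) = s * norm d" using s by simp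
    also have "\<dots> \<le> s * (norm d + 1)" using s by simp
    also have "\<dots> < e" using s \<open>norm d + 1 > 0\<close> by (simp add: less_divide_eq)
    finally have "v + s *\<^sub>R d \<in> ball v e" by (simp add: dist_norm)
    hence sU: "v + s *\<^sub>R d \<in> U" using e by blast
    have Fs: "F (v + s *\<^sub>R d) = ereal (g s)" using F_U_real[OF sU] by (simp add: g_def)
    have F0: "F v = ereal (g 0)" using F_U_real[OF vU'] by (simp add: g_def)
    have eqy: "x k - t k *\<^sub>R (v + s *\<^sub>R d) = (1 - s) *\<^sub>R y0 + s *\<^sub>R y"
    proof -
      have "x k - t k *\<^sub>R (v + s *\<^sub>R d) = y0 - s *\<^sub>R (tk *\<^sub>R d)"
        by (simp add: y0_def tk_def algebra_simps)
      also have "\<dots> = (1 - s) *\<^sub>R y0 + s *\<^sub>R y" by (simp add: td algebra_simps)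
      finally show ?thesis .
    qed
    have j0': "J y0 = ereal j0" using j0 by (simp add: y0_def tk_def v_def)
    have Jc: "J ((1 - s) *\<^sub>R y0 + s *\<^sub>R y) \<le> ereal ((1 - s) * j0 + s * jy)"
      using J_conv[OF j0' real] s by simp
    have "phi k v \<le> phi k (v + s *\<^sub>R d)" unfolding v_def by (rule vk_min)
    hence "J y0 + ereal tk * F v \<le> J ((1 - s) *\<^sub>R y0 + s *\<^sub>R y) + ereal tk * F (v + s *\<^sub>R d)"
      by (simp add: phi_def eqy y0_def tk_def)
    hence "ereal (j0 + tk * g 0) \<le> J ((1 - s) *\<^sub>R y0 + s *\<^sub>R y) + ereal (tk * g s)"
      using j0' F0 Fs by simp
    also have "\<dots> \<le> ereal ((1 - s) * j0 + s * jy) + ereal (tk * g s)"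
      using Jc by (rule add_right_mono)
    finally have "j0 + tk * g 0 \<le> (1 - s) * j0 + s * jy + tk * g s" by simp
    hence "(j0 - jy) * s \<le> tk * (g s - g 0)" by (simp add: algebra_simps)
    hence "j0 - jy \<le> tk * (g s - g 0) / s" using s by (simp add: pos_le_divide_eq)
    thus ?case by simp
  qed
  hence "- tk * inner d p \<le> jy - j0"
    using tendsto_upperbound[OF limr2] by simp
  moreover have "- tk * inner d p = inner (G (vk k)) (y - (x k - t k *\<^sub>R vk k))"
    using tp by (simp add: d_def p_def v_def y0_def tk_def inner_commute inner_diff_right algebra_simps)
  ultimately show ?thesis using real by simp
qed (use J_nm in auto)

lemma Jstar:
  assumes vU: "vk k \<in> U" and j0: "J (x k - t k *\<^sub>R vk k) = ereal j0"
  shows "fenchel_conj J (G (vk k)) = ereal (inner (G (vk k)) (x k - t k *\<^sub>R vk k) - j0)"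
proof (rule antisym)
  show "fenchel_conj J (G (vk k)) \<le> ereal (inner (G (vk k)) (x k - t k *\<^sub>R vk k) - j0)"
    unfolding fenchel_conj_def
  proof (rule SUP_least)
    fix y
    have o: "ereal (j0 + inner (G (vk k)) (y - (x k - t k *\<^sub>R vk k))) \<le> J y" by (rule opt[OF vU j0])
    show "ereal (inner y (G (vk k))) - J y \<le> ereal (inner (G (vk k)) (x k - t k *\<^sub>R vk k) - j0)"
    proof (cases "J y")
      case (real jy)
      thus ?thesis using o by (simp add: inner_diff_right inner_commute)
    qed (use J_nm in auto)
  qed
  show "ereal (inner (G (vk k)) (x k - t k *\<^sub>R vk k) - j0) \<le> fenchel_conj J (G (vk k))"
    unfolding fenchel_conj_def using j0
    by (intro SUP_upper2[of "x k - t k *\<^sub>R vk k"]) (auto simp: inner_commute)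
qed

lemma set1:
  assumes vU: "vk k \<in> U"
  shows "{w. \<forall>u. phi k w \<le> phi k u} = {vk k}"
proof
  show "{vk k} \<subseteq> {w. \<forall>u. phi k w \<le> phi k u}" using vk_min by auto
  show "{w. \<forall>u. phi k w \<le> phi k u} \<subseteq> {vk k}"
  proof
    fix w assume "w \<in> {w. \<forall>u. phi k w \<le> phi k u}"
    hence wmin: "\<And>u. phi k w \<le> phi k u" by blast
    show "w \<in> {vk k}"
    proof (rule ccontr)
      assume "w \<notin> {vk k}"
      hence ne: "w \<noteq> vk k" by simp
      define v where "v = vk k"
      define tk where "tk = t k"
      have tp: "tk > 0" using A2_tpos by (simp add: tk_def)
      obtain j0 fv where jf: "J (x k - t k *\<^sub>R v) = ereal j0" "F v = ereal fv"
        "phi k v = ereal (j0 + t k * fv)" using vk_fin[of k] unfolding v_def by blast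
      have le1: "phi k w \<le> phi k v" by (rule wmin)
      have le2: "phi k v \<le> phi k w" unfolding v_def by (rule vk_min)
      have "J (x k - t k *\<^sub>R w) + ereal (t k) * F w \<le> ereal (j0 + t k * fv)"
        using le1 jf by (simp add: phi_def)
      hence fin: "J (x k - t k *\<^sub>R w) \<noteq> \<infinity> \<and> ereal (t k) * F w \<noteq> \<infinity>"
        by (rule sum_fin[OF J_nm tF_nm])
      then obtain jw where jw: "J (x k - t k *\<^sub>R w) = ereal jw" using J_nm by (metis ereal_cases)
      have "F w \<noteq> \<infinity>" using fin A2_tpos[of k] by auto
      then obtain fw where fw: "F w = ereal fw" using F_nm by (metis ereal_cases)
      have eqw: "jw + tk * fw = j0 + tk * fv"
        using le1 le2 jf jw fw by (simp add: phi_def tk_def)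
      have vU': "v \<in> U" using vU by (simp add: v_def)
      obtain e where e: "e > 0" "ball v e \<subseteq> U" using vU' open_interior open_contains_ball by blast
      have nwv: "norm (w - v) > 0" using ne by (simp add: v_def)
      define s where "s = min (1/2) (e / (2 * norm (w - v)))"
      have s: "0 < s" "s < 1" using e nwv by (auto simp: s_def)
      have "norm (s *\<^sub>R (w - v)) = s * norm (w - v)" using s by simp
      also have "\<dots> \<le> (e / (2 * norm (w - v))) * norm (w - v)"
        by (intro mult_right_mono) (auto simp: s_def)
      also have "\<dots> < e" using nwv e by (simp add: field_simps)
      finally have "v + s *\<^sub>R (w - v) \<in> ball v e" by (simp add: dist_norm)
      hence mU: "v + s *\<^sub>R (w - v) \<in> U" using e by blast
      define m where "m = v + s *\<^sub>R (w - v)"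
      have mU': "m \<in> U" using mU by (simp add: m_def)
      have attm: "att m (G m)" by (rule G_att[OF mU'])
      define q where "q = G m"
      obtain hq where hq: "H q = ereal hq" "F m = ereal (inner q m - hq)"
        using att_real[OF attm] unfolding q_def by blast
      have iv: "inner q v - hq \<le> fv" using F_ge_real[OF hq(1), of v] jf by simp
      have iw: "inner q w - hq \<le> fw" using F_ge_real[OF hq(1), of w] fw by simp
      have notboth: "\<not> (inner q v - hq = fv \<and> inner q w - hq = fw)"
      proof
        assume "inner q v - hq = fv \<and> inner q w - hq = fw"
        hence "F v = ereal (inner q v - hq)" "F w = ereal (inner q w - hq)" using jf fw by auto
        hence "v = egrad H q" "w = egrad H q" using key[OF hq(1)] by blast+
        thus False using ne by (simp add: v_def)
      qed
      have qm: "inner q m = (1 - s) * inner q v + s * inner q w"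
        by (simp add: m_def inner_add_right inner_diff_right algebra_simps)
      have "(1 - s) * (inner q v - hq) + s * (inner q w - hq) < (1 - s) * fv + s * fw"
      proof (cases "inner q v - hq = fv")
        case True
        hence "inner q w - hq < fw" using notboth iw by auto
        thus ?thesis using True s by simp
      next
        case False
        hence "inner q v - hq < fv" using iv by simp
        hence "(1 - s) * (inner q v - hq) < (1 - s) * fv" using s by simp
        moreover have "s * (inner q w - hq) \<le> s * fw" using iw s by simp
        ultimately show ?thesis by simp
      qed
      hence fm: "inner q m - hq < (1 - s) * fv + s * fw" using qm by (simp add: algebra_simps)
      have eqm: "x k - t k *\<^sub>R m = (1 - s) *\<^sub>R (x k - t k *\<^sub>R v) + s *\<^sub>R (x k - t k *\<^sub>R w)"
        by (simp add: m_def algebra_simps)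
      have Jm: "J (x k - t k *\<^sub>R m) \<le> ereal ((1 - s) * j0 + s * jw)"
        unfolding eqm using J_conv[OF jf(1) jw] s by simp
      have "tk * (inner q m - hq) < tk * ((1 - s) * fv + s * fw)" using fm tp by simp
      moreover have "(1 - s) * j0 + s * jw + tk * ((1 - s) * fv + s * fw)
          = (1 - s) * (j0 + tk * fv) + s * (jw + tk * fw)" by (simp add: algebra_simps)
      moreover have "(1 - s) * (j0 + tk * fv) + s * (jw + tk * fw) = j0 + tk * fv"
        using eqw by (simp add: algebra_simps)
      ultimately have "(1 - s) * j0 + s * jw + tk * (inner q m - hq) < j0 + tk * fv"
        by linarith
      hence "phi k m < phi k v"
        using Jm hq(2) jf(3) unfolding phi_def tk_def
        by (smt (verit) add_right_mono ereal_less(2) less_ereal.simps(1) order_le_less_trans plus_ereal.simps(1) times_ereal.simps(1))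
      moreover have "phi k v \<le> phi k m" unfolding v_def by (rule vk_min)
      ultimately show False by simp
    qed
  qed
qed

definition obj :: "nat \<Rightarrow> 'a \<Rightarrow> ereal" where
  "obj k w = ereal (t k) * bregman F (x k /\<^sub>R t k) w + fenchel_conj J (egrad F w)"

lemma obj_form:
  assumes uU: "u \<in> U" and fa: "F (x k /\<^sub>R t k) = ereal fa"
  obtains hq where "H (G u) = ereal hq" "F u = ereal (inner (G u) u - hq)"
    "obj k u = ereal (t k * (fa + hq - inner (G u) (x k /\<^sub>R t k))) + fenchel_conj J (G u)"
proof -
  obtain hq where hq: "H (G u) = ereal hq" "F u = ereal (inner (G u) u - hq)"
    using att_real[OF G_att[OF uU]] by blast
  have "bregman F (x k /\<^sub>R t k) u = ereal (fa + hq - inner (G u) (x k /\<^sub>R t k))"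
    unfolding bregman_def egrad_F[OF uU] using fa hq by (simp add: inner_diff_right)
  hence "obj k u = ereal (t k * (fa + hq - inner (G u) (x k /\<^sub>R t k))) + fenchel_conj J (G u)"
    unfolding obj_def egrad_F[OF uU] by simp
  thus ?thesis using that hq by blast
qed

lemma Tform:
  "t k * (fa + hq - inner q (x k /\<^sub>R t k)) + inner q (x k - t k *\<^sub>R v) - j0
     = t k * fa - j0 + t k * (hq - inner q v)"
proof -
  have tp: "t k > 0" by (rule A2_tpos)
  have a: "t k * inner q (x k /\<^sub>R t k) = inner q (x k)" using tp by simp
  have b: "inner q (x k - t k *\<^sub>R v) = inner q (x k) - t k * inner q v" by (simp add: inner_diff_right)
  have c1: "t k * (fa + hq - A) = t k * fa + t k * hq - t k * A" for A
    by (simp add: algebra_simps)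
  have c2: "t k * (hq - B) = t k * hq - t k * B" for B by (simp add: algebra_simps)
  show ?thesis unfolding c1 c2 b using a by linarith
qed

lemma set2:
  assumes vU: "vk k \<in> U" and aU: "x k /\<^sub>R t k \<in> U"
  shows "{w \<in> U. \<forall>u \<in> U. obj k w \<le> obj k u} = {vk k}"
proof -
  define v where "v = vk k"
  have vU': "v \<in> U" using vU by (simp add: v_def)
  have tp: "t k > 0" by (rule A2_tpos)
  obtain fa where fa: "F (x k /\<^sub>R t k) = ereal fa" using F_U_real[OF aU] by blast
  obtain j0 fv where jf: "J (x k - t k *\<^sub>R v) = ereal j0" "F v = ereal fv"
    using vk_fin[of k] unfolding v_def by blast
  define p where "p = G v"
  obtain hp where hp: "H p = ereal hp" "F v = ereal (inner p v - hp)"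
    "obj k v = ereal (t k * (fa + hp - inner p (x k /\<^sub>R t k))) + fenchel_conj J p"
    using obj_form[OF vU' fa] unfolding p_def by blast
  have Js: "fenchel_conj J p = ereal (inner p (x k - t k *\<^sub>R v) - j0)"
    using Jstar[OF vU] jf unfolding p_def v_def by blast
  define T where "T q hq = t k * (fa + hq - inner q (x k /\<^sub>R t k)) + inner q (x k - t k *\<^sub>R v) - j0" for q hq
  have objv: "obj k v = ereal (T p hp)" using hp(3) Js by (simp add: T_def)
  have lower: "ereal (T (G u) hq) \<le> obj k u \<and> T p hp \<le> T (G u) hq"
    if uU: "u \<in> U" and hq: "H (G u) = ereal hq"
      "obj k u = ereal (t k * (fa + hq - inner (G u) (x k /\<^sub>R t k))) + fenchel_conj J (G u)" for u hq
  proof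
    have "ereal (inner (G u) (x k - t k *\<^sub>R v) - j0) \<le> fenchel_conj J (G u)"
      unfolding fenchel_conj_def using jf
      by (intro SUP_upper2[of "x k - t k *\<^sub>R v"]) (auto simp: inner_commute)
    thus "ereal (T (G u) hq) \<le> obj k u" using hq(2) unfolding T_def
      by (metis add_left_mono add_diff_eq_ereal plus_ereal.simps(1) ereal_minus(1))
    have "ereal (inner (G u) v - hq) \<le> F v" by (rule F_ge_real[OF hq(1)])
    hence "hp - inner p v \<le> hq - inner (G u) v" using hp(2) by simp
    hence "t k * (hp - inner p v) \<le> t k * (hq - inner (G u) v)" using tp by simp
    thus "T p hp \<le> T (G u) hq" unfolding T_def using Tform by simp
  qed
  show ?thesis
  proof
    show "{vk k} \<subseteq> {w \<in> U. \<forall>u \<in> U. obj k w \<le> obj k u}"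
    proof safe
      show "vk k \<in> U" by (rule vU)
      fix u assume uU: "u \<in> U"
      obtain hq where hq: "H (G u) = ereal hq" "F u = ereal (inner (G u) u - hq)"
        "obj k u = ereal (t k * (fa + hq - inner (G u) (x k /\<^sub>R t k))) + fenchel_conj J (G u)"
        using obj_form[OF uU fa] by blast
      have l: "ereal (T (G u) hq) \<le> obj k u" "T p hp \<le> T (G u) hq" using lower[OF uU hq(1) hq(3)] by auto
      show "obj k (vk k) \<le> obj k u" using objv l unfolding v_def
        by (metis ereal_less_eq(3) order_trans)
    qed
    show "{w \<in> U. \<forall>u \<in> U. obj k w \<le> obj k u} \<subseteq> {vk k}"
    proof safe
      fix w assume wU: "w \<in> U" and wmin: "\<forall>u\<in>U. obj k w \<le> obj k u"
      obtain hq where hq: "H (G w) = ereal hq" "F w = ereal (inner (G w) w - hq)"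
        "obj k w = ereal (t k * (fa + hq - inner (G w) (x k /\<^sub>R t k))) + fenchel_conj J (G w)"
        using obj_form[OF wU fa] by blast
      have l: "ereal (T (G w) hq) \<le> obj k w" "T p hp \<le> T (G w) hq" using lower[OF wU hq(1) hq(3)] by auto
      have "obj k w \<le> obj k v" using wmin vU' by blast
      hence "ereal (T (G w) hq) \<le> ereal (T p hp)" using l(1) objv by (metis order_trans)
      hence "T (G w) hq \<le> T p hp" by simp
      hence eq: "T (G w) hq = T p hp" using l(2) by simp
      hence "t k * (hq - inner (G w) v) = t k * (hp - inner p v)" unfolding T_def using Tform by simp
      hence "hq - inner (G w) v = hp - inner p v" using tp by simp
      hence "F v = ereal (inner (G w) v - hq)" using hp(2) by simp
      hence "v = egrad H (G w)" using key[OF hq(1)] by blast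
      moreover have "w = egrad H (G w)" using att_key[OF G_att[OF wU]] by blast
      ultimately show "w = vk k" by (simp add: v_def)
    qed
  qed
qed

lemma result:
  "\<exists>N. \<exists>v :: nat \<Rightarrow> 'a.
     (\<forall>k\<ge>N.
        {w. \<forall>u. J (x k - t k *\<^sub>R w) + ereal (t k) * fenchel_conj H w
                \<le> J (x k - t k *\<^sub>R u) + ereal (t k) * fenchel_conj H u} = {v k}
      \<and> {w \<in> interior (edom (fenchel_conj H)). \<forall>u \<in> interior (edom (fenchel_conj H)).
            ereal (t k) * bregman (fenchel_conj H) (x k /\<^sub>R t k) w + fenchel_conj J (egrad (fenchel_conj H) w)
            \<le> ereal (t k) * bregman (fenchel_conj H) (x k /\<^sub>R t k) u + fenchel_conj J (egrad (fenchel_conj H) u)}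
          = {v k})
     \<and> v \<longlonglongrightarrow> v0"
proof -
  have e1: "eventually (\<lambda>k. vk k \<in> U) sequentially"
    by (rule topological_tendstoD[OF vk_conv open_interior A2_v0])
  have e2: "eventually (\<lambda>k. x k /\<^sub>R t k \<in> U) sequentially"
    by (rule topological_tendstoD[OF A2_xlim open_interior A2_v0])
  obtain N where N: "\<And>k. k \<ge> N \<Longrightarrow> vk k \<in> U \<and> x k /\<^sub>R t k \<in> U"
    using eventually_conj[OF e1 e2] unfolding eventually_sequentially by blast
  show ?thesis
  proof (intro exI conjI allI impI)
    fix k assume k: "N \<le> k"
    show "{w. \<forall>u. J (x k - t k *\<^sub>R w) + ereal (t k) * fenchel_conj H w
                \<le> J (x k - t k *\<^sub>R u) + ereal (t k) * fenchel_conj H u} = {vk k}"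
      using set1[of k] N[OF k] unfolding phi_def by blast
    show "{w \<in> interior (edom (fenchel_conj H)). \<forall>u \<in> interior (edom (fenchel_conj H)).
            ereal (t k) * bregman (fenchel_conj H) (x k /\<^sub>R t k) w + fenchel_conj J (egrad (fenchel_conj H) w)
            \<le> ereal (t k) * bregman (fenchel_conj H) (x k /\<^sub>R t k) u + fenchel_conj J (egrad (fenchel_conj H) u)}
          = {vk k}"
      using set2[of k] N[OF k] unfolding obj_def by blast
  next
    show "vk \<longlonglongrightarrow> v0" by (rule vk_conv)
  qed
qed

end

theorem proposition8p1:
  fixes J H :: "'a::euclidean_space \<Rightarrow> ereal"
    and v0 :: 'a and t :: "nat \<Rightarrow> real" and x :: "nat \<Rightarrow> 'a"
  assumes A1_J: "Gamma0 J" and A1_coercive: "one_coercive J"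
    and A1_H: "Gamma0 H" and A1_legendre: "legendre H"
    and A2_v0: "v0 \<in> interior (edom (fenchel_conj H))"
    and A2_tpos: "\<And>k. t k > 0"
    and A2_tlim: "filterlim t at_top sequentially"
    and A2_xlim: "(\<lambda>k. x k /\<^sub>R t k) \<longlonglongrightarrow> v0"
    and A2_dom: "\<And>k. x k - t k *\<^sub>R v0 \<in> edom J"
    and A2_bdd: "\<exists>M. \<forall>k. J (x k - t k *\<^sub>R v0) / ereal (t k) \<le> ereal M"
  shows "\<exists>N. \<exists>v :: nat \<Rightarrow> 'a.
           (\<forall>k\<ge>N.
              {w. \<forall>u. J (x k - t k *\<^sub>R w) + ereal (t k) * fenchel_conj H w
                      \<le> J (x k - t k *\<^sub>R u) + ereal (t k) * fenchel_conj H u} = {v k}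
            \<and> {w \<in> interior (edom (fenchel_conj H)). \<forall>u \<in> interior (edom (fenchel_conj H)).
                  ereal (t k) * bregman (fenchel_conj H) (x k /\<^sub>R t k) w + fenchel_conj J (egrad (fenchel_conj H) w)
                  \<le> ereal (t k) * bregman (fenchel_conj H) (x k /\<^sub>R t k) u + fenchel_conj J (egrad (fenchel_conj H) u)}
                = {v k})
           \<and> v \<longlonglongrightarrow> v0"
proof -
  interpret main H J v0 t x
    using A1_legendre A1_J A1_coercive A2_v0 A2_tpos A2_tlim A2_xlim A2_dom A2_bdd
    by unfold_locales auto
  show ?thesis by (rule result)
qed

end
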